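(* Let $X$ be a finite-dimensional real Hilbert space and $J:X\to \mathbb{R}$ a $C^1$ function. Set $$\eta=\liminf_{\|x\|\to +\infty}\frac{J(x)}{\|x\|^2}$$ and $$\theta=\inf\left\{\frac{J(x)-J(u)}{\|x-u\|^2} : (u,x)\in M_J\times X,\ x\neq u\right\},$$ where $M_J$ denotes the set of all global minima of $J$. Assume that $\theta<\eta$. Then, for each $\mu\in\,]2\theta,2\eta[$, there exists $y_\mu\in X$ such that the equation $$J'(x)-\mu x=y_\mu$$ has at least three solutions $x\in X$.
   Context: The derivative $J'(x)$ is identified with an element of $X$ via the inner product (Riesz representation). The infimum of the empty set is $+\infty$. *)

theory Defs
  imports "HOL-Analysis.Analysis"
begin

definition global_minima :: "('a \<Rightarrow> real) \<Rightarrow> 'a set" where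
  "global_minima J = {u. \<forall>x. J u \<le> J x}"

definition eta_const :: "('a::real_normed_vector \<Rightarrow> real) \<Rightarrow> ereal" where
  "eta_const J = Liminf at_infinity (\<lambda>x. ereal (J x / (norm x)^2))"

text \<open>theta; the infimum of the empty set is +infinity (ereal top).\<close>
definition theta_const :: "('a::real_normed_vector \<Rightarrow> real) \<Rightarrow> ereal" where
  "theta_const J = Inf {ereal ((J x - J u) / (norm (x - u))^2) | u x. u \<in> global_minima J \<and> x \<noteq> u}"

end

theory Submission
  imports Defs "HOL-Homology.Invariance_of_Domain"
begin

lemma mp_aux:
  fixes f :: "'a::euclidean_space \<Rightarrow> real" and G :: "'a \<Rightarrow> 'a"
  assumes der: "\<And>x. (f has_derivative (\<lambda>h. G x \<bullet> h)) (at x)"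
    and contG: "continuous_on UNIV G"
    and bdd: "\<And>t. bounded {x. f x \<le> t}"
    and ab: "a \<noteq> b" and amin: "\<And>x. f a \<le> f x" and fb: "f b = f a"
    and crit: "\<And>x. G x = 0 \<Longrightarrow> x = a \<or> x = b"
  shows False
proof -
  have contf: "continuous_on UNIV f"
    using der by (meson continuous_at_imp_continuous_on has_derivative_continuous)
  have Lcomp: "compact {x. f x \<le> t}" for t
    using bdd[of t] closed_Collect_le[OF contf continuous_on_const]
    by (simp add: compact_eq_bounded_closed)
  have critmin: "G z = 0" if "\<And>x. f z \<le> f x" for z
  proof -
    have "(\<lambda>h. G z \<bullet> h) = (\<lambda>v. 0)"
      by (rule differential_zero_maxmin[of z UNIV f]) (use der that in auto)
    then have "G z \<bullet> G z = 0" by meson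
    then show ?thesis by simp
  qed
  have Ga: "G a = 0" using critmin amin by blast
  have Gb: "G b = 0" using critmin amin fb by metis
  define m where "m = f a"
  define T where "T = {t. \<exists>K. connected K \<and> a \<in> K \<and> b \<in> K \<and> (\<forall>x\<in>K. f x \<le> t)}"
  have Tne: "T \<noteq> {}"
  proof -
    have ne: "closed_segment a b \<noteq> {}" by auto
    obtain z where "z \<in> closed_segment a b" "\<forall>y\<in>closed_segment a b. f y \<le> f z"
      using continuous_attains_sup[OF compact_segment ne continuous_on_subset[OF contf subset_UNIV]] by blast
    then have "f z \<in> T" unfolding T_def
      by (intro CollectI exI[of _ "closed_segment a b"]) (auto intro: convex_connected)
    then show ?thesis by blast
  qed
  have Tlow: "m \<le> t" if "t \<in> T" for t
    using that unfolding T_def m_def by auto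
  have bddT: "bdd_below T" using Tlow by (auto simp: bdd_below_def)
  define ts where "ts = Inf T"
  define r where "r = dist a b / 3"
  have rpos: "r > 0" using ab by (simp add: r_def)
  define S where "S = {x. f x \<le> m + 1} - (ball a r \<union> ball b r)"
  have Scomp: "compact S" unfolding S_def
    by (intro compact_diff Lcomp) auto
  obtain m' where m'gt: "m' > m" and m'S: "\<And>x. x \<in> S \<Longrightarrow> m' \<le> f x"
  proof (cases "S = {}")
    case True
    then show ?thesis using that[of "m+1"] by auto
  next
    case False
    then obtain z where zS: "z \<in> S" and zmin: "\<And>y. y \<in> S \<Longrightarrow> f z \<le> f y"
      using continuous_attains_inf[OF Scomp False continuous_on_subset[OF contf]] by blast
    have "f z > m"
    proof (rule ccontr)
      assume "\<not> f z > m"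
      then have "\<And>x. f z \<le> f x" using amin unfolding m_def by (meson not_le order_trans)
      then have "G z = 0" by (rule critmin)
      then have "z = a \<or> z = b" by (rule crit)
      then show False using zS rpos unfolding S_def by auto
    qed
    then show ?thesis using that[of "f z"] zmin by blast
  qed
  have tsA: "min m' (m+1) \<le> ts"
    unfolding ts_def
  proof (rule cInf_greatest[OF Tne])
    fix t assume "t \<in> T"
    then obtain K where K: "connected K" "a \<in> K" "b \<in> K" "\<forall>x\<in>K. f x \<le> t"
      unfolding T_def by blast
    show "min m' (m+1) \<le> t"
    proof (rule ccontr)
      assume "\<not> min m' (m+1) \<le> t"
      then have tl: "t < m'" "t < m + 1" by auto
      have "K \<subseteq> ball a r \<union> ball b r"
      proof
        fix x assume "x \<in> K"
        then have "f x \<le> t" using K by auto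
        then show "x \<in> ball a r \<union> ball b r"
          using m'S[of x] tl unfolding S_def by force
      qed
      moreover have "ball a r \<inter> ball b r \<inter> K = {}"
      proof -
        have "ball a r \<inter> ball b r = {}"
        proof (rule ccontr)
          assume "ball a r \<inter> ball b r \<noteq> {}"
          then obtain z where "dist a z < r" "dist b z < r" by auto
          then have "dist a b < 2 * r" by (metis dist_commute dist_triangle_lt add_strict_mono mult_2)
          then show False using rpos ab unfolding r_def by simp
        qed
        then show ?thesis by blast
      qed
      ultimately have "ball a r \<inter> K = {} \<or> ball b r \<inter> K = {}"
        using connectedD[OF K(1)] by blast
      then show False using K rpos by (metis centre_in_ball disjoint_iff)
    qed
  qed
  have tsm: "ts > m" using tsA m'gt by linarith
  define e1 where "e1 = (ts - m) / 2"
  have e1pos: "e1 > 0" using tsm by (simp add: e1_def)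
  define R where "R = {x. f x \<le> ts + 1}"
  define Q where "Q = R \<inter> {x. ts - e1 \<le> f x}"
  have Qcomp: "compact Q" unfolding Q_def R_def
    by (intro compact_Int_closed Lcomp closed_Collect_le contf continuous_on_const)
  obtain \<delta> where dpos: "\<delta> > 0" and dQ: "\<And>x. x \<in> Q \<Longrightarrow> \<delta> \<le> norm (G x)"
  proof (cases "Q = {}")
    case True
    then show ?thesis using that[of 1] by auto
  next
    case False
    have cn: "continuous_on Q (\<lambda>x. norm (G x))"
      by (intro continuous_intros continuous_on_subset[OF contG]) auto
    obtain z where zQ: "z \<in> Q" and zmin: "\<And>y. y \<in> Q \<Longrightarrow> norm (G z) \<le> norm (G y)"
      using continuous_attains_inf[OF Qcomp False cn] by blast
    have "G z \<noteq> 0"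
    proof
      assume "G z = 0"
      then have "z = a \<or> z = b" by (rule crit)
      then have "f z = m" using fb m_def by auto
      then show False using zQ e1pos tsm unfolding Q_def e1_def by (auto simp: field_simps)
    qed
    then show ?thesis using that[of "norm (G z)"] zmin by auto
  qed
  obtain \<rho> where rhopos: "\<rho> > 0" and rhoR: "\<And>x. x \<in> R \<Longrightarrow> norm x \<le> \<rho>"
    using bdd[of "ts + 1"] unfolding R_def bounded_pos by blast
  obtain M where Mpos: "M > 0" and MG: "\<And>x. x \<in> cball 0 \<rho> \<Longrightarrow> norm (G x) \<le> M"
  proof -
    have "compact (G ` cball 0 \<rho>)"
      by (intro compact_continuous_image continuous_on_subset[OF contG]) auto
    from compact_imp_bounded[OF this] obtain M where "M > 0" "\<forall>y\<in>G ` cball 0 \<rho>. norm y \<le> M"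
      unfolding bounded_pos by blast
    then show ?thesis using that by auto
  qed
  have ucG: "uniformly_continuous_on (cball 0 (\<rho>+1)) G"
    by (intro compact_uniformly_continuous continuous_on_subset[OF contG]) auto
  obtain \<eta> where etapos: "\<eta> > 0"
    and etaG: "\<And>x x'. x \<in> cball 0 (\<rho>+1) \<Longrightarrow> x' \<in> cball 0 (\<rho>+1) \<Longrightarrow> dist x' x < \<eta> \<Longrightarrow> dist (G x') (G x) < \<delta>/2"
    using ucG[unfolded uniformly_continuous_on_def, rule_format, of "\<delta>/2"] dpos by auto
  define s where "s = min (1/M) (min (\<eta>/(2*M)) (e1/(\<delta>*M)))"
  have spos: "s > 0" unfolding s_def using Mpos etapos e1pos dpos by auto
  have s1: "s \<le> 1/M" "s \<le> \<eta>/(2*M)" "s \<le> e1/(\<delta>*M)" unfolding s_def by auto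
  have sM1: "s * M \<le> 1" using s1(1) Mpos by (simp add: le_divide_eq)
  have "s * (2*M) \<le> \<eta>" using s1(2) Mpos by (simp add: le_divide_eq)
  then have sM2: "s * M < \<eta>" using spos Mpos etapos by (simp add: algebra_simps)
  have "s * (\<delta>*M) \<le> e1" using s1(3) Mpos dpos by (simp add: le_divide_eq)
  then have sM3: "s * \<delta> * M \<le> e1" by (simp add: algebra_simps)
  define D where "D = (\<lambda>x. x - s *\<^sub>R G x)"
  have descent: "f (D x) \<le> f x - s * norm (G x)^2 + s * (\<delta>/2) * norm (G x)" if xR: "x \<in> R" for x
  proof -
    define v where "v = G x"
    define \<phi> where "\<phi> = (\<lambda>z. f z - v \<bullet> z)"
    have nv: "norm v \<le> M" using MG rhoR[OF xR] unfolding v_def by auto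
    have xin: "x \<in> cball 0 (\<rho>+1)" using rhoR[OF xR] by auto
    have segb: "norm (G z - v) \<le> \<delta>/2" if "z \<in> closed_segment x (x - s *\<^sub>R v)" for z
    proof -
      have "dist z x \<le> dist x (x - s *\<^sub>R v)" using dist_in_closed_segment[OF that] by auto
      also have "\<dots> = s * norm v" using spos by (simp add: dist_norm)
      also have "\<dots> \<le> s * M" using nv spos by (simp add: mult_left_mono)
      finally have dz: "dist z x \<le> s * M" .
      have "norm z \<le> norm x + dist z x" by (metis dist_norm norm_triangle_sub add.commute)
      then have zin: "z \<in> cball 0 (\<rho>+1)" using dz sM1 rhoR[OF xR] by auto
      have "dist (G z) (G x) < \<delta>/2" using etaG[OF xin zin] dz sM2 by linarith
      then show ?thesis by (simp add: dist_norm v_def)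
    qed
    have derphi: "(\<phi> has_derivative (\<lambda>h. (G z - v) \<bullet> h)) (at z within closed_segment x (x - s *\<^sub>R v))" for z
      unfolding \<phi>_def
      by (rule has_derivative_at_withinI, rule has_derivative_eq_rhs,
          (rule derivative_eq_intros der)+, auto simp: inner_diff_left)
    have onb: "onorm (\<lambda>h. (G z - v) \<bullet> h) \<le> \<delta>/2" if "z \<in> closed_segment x (x - s *\<^sub>R v)" for z
    proof -
      have "onorm (\<lambda>h. (G z - v) \<bullet> h) \<le> norm (G z - v) * onorm (\<lambda>x::'a. x)"
        by (rule onorm_inner_right[OF bounded_linear_ident])
      also have "\<dots> \<le> norm (G z - v) * 1"
        by (intro mult_left_mono onorm_id_le) auto
      finally show ?thesis using segb[OF that] by simp
    qed
    have "norm (\<phi> (x - s *\<^sub>R v) - \<phi> x) \<le> \<delta>/2 * norm ((x - s *\<^sub>R v) - x)"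
      by (rule differentiable_bound[OF convex_closed_segment derphi onb]) auto
    then have "\<bar>\<phi> (x - s *\<^sub>R v) - \<phi> x\<bar> \<le> \<delta>/2 * (s * norm v)"
      using spos by auto
    then have "\<phi> (x - s *\<^sub>R v) - \<phi> x \<le> \<delta>/2 * (s * norm v)"
      by linarith
    moreover have "\<phi> (x - s *\<^sub>R v) - \<phi> x = f (x - s *\<^sub>R v) - f x + s * norm v ^ 2"
      unfolding \<phi>_def by (simp add: inner_diff_right power2_norm_eq_inner)
    ultimately show ?thesis unfolding D_def v_def by (simp add: algebra_simps)
  qed
  define e where "e = min (e1/2) (s * \<delta>^2 / 4)"
  have epos: "e > 0" unfolding e_def using e1pos spos dpos by auto
  obtain t where tT: "t \<in> T" and tlt: "t < ts + min 1 (s * \<delta>^2/4)"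
  proof -
    have "min 1 (s * \<delta>^2/4) > 0" using spos dpos by auto
    then have "Inf T < ts + min 1 (s * \<delta>^2/4)" unfolding ts_def by simp
    then show ?thesis using that cInf_less_iff[OF Tne bddT] by blast
  qed
  then obtain K where K: "connected K" "a \<in> K" "b \<in> K" "\<forall>x\<in>K. f x \<le> t"
    unfolding T_def by blast
  have KR: "K \<subseteq> R" using K(4) tlt unfolding R_def by force
  have contD: "continuous_on K D" unfolding D_def
    by (intro continuous_intros continuous_on_subset[OF contG]) auto
  have "ts - e \<in> T" unfolding T_def
  proof (intro CollectI exI[of _ "D ` K"] conjI ballI)
    show "connected (D ` K)" by (rule connected_continuous_image[OF contD K(1)])
    show "a \<in> D ` K" using K(2) Ga by (force simp: D_def)
    show "b \<in> D ` K" using K(3) Gb by (force simp: D_def)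
  next
    fix y assume "y \<in> D ` K"
    then obtain x where xK: "x \<in> K" and y: "y = D x" by auto
    have xR: "x \<in> R" using KR xK by auto
    have nM: "norm (G x) \<le> M" using MG rhoR[OF xR] by auto
    show "f y \<le> ts - e"
    proof (cases "ts - e1 \<le> f x")
      case True
      then have "x \<in> Q" using xR unfolding Q_def by auto
      then have nd: "\<delta> \<le> norm (G x)" by (rule dQ)
      have "norm (G x)^2 - (\<delta>/2) * norm (G x) - \<delta>^2/2 = (norm (G x) - \<delta>) * (norm (G x) + \<delta>/2)"
        by (simp add: field_simps power2_eq_square)
      also have "\<dots> \<ge> 0" using nd dpos by (intro mult_nonneg_nonneg) auto
      finally have "s * (norm (G x)^2 - (\<delta>/2) * norm (G x)) \<ge> s * (\<delta>^2/2)"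
        using spos by (intro mult_left_mono) auto
      then have "f y \<le> f x - s * \<delta>^2/2"
        using descent[OF xR] y by (simp add: algebra_simps)
      moreover have "f x < ts + s * \<delta>^2/4" using K(4) xK tlt by force
      ultimately show ?thesis unfolding e_def by linarith
    next
      case False
      have "s * (\<delta>/2) * norm (G x) \<le> s * (\<delta>/2) * M"
        using nM spos dpos by (intro mult_left_mono) auto
      moreover have "s * norm (G x)^2 \<ge> 0" using spos by auto
      ultimately have "f y \<le> f x + s * \<delta> * M / 2"
        using descent[OF xR] y by (simp add: algebra_simps)
      then show ?thesis using False sM3 unfolding e_def by linarith
    qed
  qed
  then have "ts \<le> ts - e" unfolding ts_def using cInf_lower[OF _ bddT] by blast
  then show False using epos by simp
qed

lemma quad_bound:
  fixes k n a b :: real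
  assumes "k > 0" "a \<ge> 0" "b \<ge> 0" "n > 1 + 2*a/k + 2*b/k"
  shows "k*n^2 - a*n > b"
proof -
  have "2*a/k \<ge> 0" "2*b/k \<ge> 0" using assms by auto
  then have n1: "n > 1" and n2: "n > 2*a/k" and n3: "n > 2*b/k" using assms(4) by linarith+
  have "k*n > 2*a" using n2 assms(1) by (simp add: divide_less_eq mult.commute)
  then have "a \<le> k*n/2" by linarith
  then have "a*n \<le> (k*n/2)*n" by (rule mult_right_mono) (use n1 in auto)
  then have A: "a*n \<le> k*n^2/2" by (simp add: power2_eq_square algebra_simps)
  have "k*n > 2*b" using n3 assms(1) by (simp add: divide_less_eq mult.commute)
  moreover have "n^2 > n" using n1 by (simp add: power2_eq_square)
  ultimately have "k*n^2 > 2*b" using assms(1) by (smt (verit) mult_strict_left_mono)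
  then show ?thesis using A by linarith
qed

theorem theorem1p2:
  fixes J :: "'a::euclidean_space \<Rightarrow> real" and J' :: "'a \<Rightarrow> 'a" and \<mu> :: real
  assumes deriv: "\<And>x. (J has_derivative (\<lambda>h. J' x \<bullet> h)) (at x)"
    and cont: "continuous_on UNIV J'"
    and lt: "theta_const J < eta_const J"
    and mu: "2 * theta_const J < ereal \<mu>" "ereal \<mu> < 2 * eta_const J"
  shows "\<exists>y. \<exists>x1 x2 x3. x1 \<noteq> x2 \<and> x1 \<noteq> x3 \<and> x2 \<noteq> x3 \<and>
           J' x1 - \<mu> *\<^sub>R x1 = y \<and> J' x2 - \<mu> *\<^sub>R x2 = y \<and> J' x3 - \<mu> *\<^sub>R x3 = y"
proof (rule ccontr)
  assume NH: "\<not> ?thesis"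
  define F where "F = (\<lambda>x. J' x - \<mu> *\<^sub>R x)"
  define P where "P = (\<lambda>y x. J x - \<mu>/2 * (x \<bullet> x) - y \<bullet> x)"
  have contJ: "continuous_on UNIV J"
    using deriv by (meson continuous_at_imp_continuous_on has_derivative_continuous)
  have contF: "continuous_on UNIV F" unfolding F_def
    by (intro continuous_intros cont)
  have derP: "(P y has_derivative (\<lambda>h. (F x - y) \<bullet> h)) (at x)" for x y
  proof -
    have d1: "((\<lambda>x. x \<bullet> x) has_derivative (\<lambda>h. x \<bullet> h + h \<bullet> x)) (at x)"
      by (rule has_derivative_inner[OF has_derivative_ident has_derivative_ident])
    have d2: "((\<lambda>x. y \<bullet> x) has_derivative (\<lambda>h. y \<bullet> h)) (at x)"
      by (rule has_derivative_inner_right[OF has_derivative_ident])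
    have "((\<lambda>x. J x - \<mu>/2 * (x \<bullet> x) - y \<bullet> x) has_derivative
           (\<lambda>h. J' x \<bullet> h - \<mu>/2 * (x \<bullet> h + h \<bullet> x) - y \<bullet> h)) (at x)"
      by (intro has_derivative_diff has_derivative_mult_right deriv d1 d2)
    then show ?thesis unfolding P_def F_def
      by (rule has_derivative_eq_rhs) (auto simp: inner_diff_left algebra_simps inner_commute)
  qed
  have half: "ereal (\<mu>/2) < eta_const J"
    using mu(2) by (cases "eta_const J") auto
  obtain c where c1: "ereal (\<mu>/2) < ereal c" and c2: "ereal c < eta_const J"
    using ereal_dense2[OF half] by blast
  have cmu: "\<mu>/2 < c" using c1 by simp
  have "eventually (\<lambda>x. ereal c < ereal (J x / (norm x)^2)) at_infinity"
    using less_LiminfD[OF c2[unfolded eta_const_def]] .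
  then obtain b0 where b0: "\<And>x. b0 \<le> norm x \<Longrightarrow> c < J x / (norm x)^2"
    unfolding eventually_at_infinity by auto
  define R0 where "R0 = max b0 1"
  obtain Jm where Jm: "\<And>x. x \<in> cball 0 R0 \<Longrightarrow> Jm \<le> J x"
  proof -
    have "compact (cball (0::'a) R0)" by simp
    moreover have "cball (0::'a) R0 \<noteq> {}" unfolding R0_def by auto
    ultimately obtain z where "z \<in> cball 0 R0" "\<forall>y\<in>cball 0 R0. J z \<le> J y"
      using continuous_attains_inf[OF _ _ continuous_on_subset[OF contJ subset_UNIV]] by blast
    then show ?thesis using that by blast
  qed
  define k where "k = c - \<mu>/2"
  define C where "C = \<bar>Jm\<bar> + \<bar>c\<bar> * R0^2"
  have kpos: "k > 0" using cmu by (simp add: k_def)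
  have Cpos: "C \<ge> 0" unfolding C_def by auto
  have coer: "k * norm x ^2 - C \<le> J x - \<mu>/2 * (x \<bullet> x)" for x
  proof -
    have "J x - c * norm x^2 \<ge> - C"
    proof (cases "norm x \<le> R0")
      case True
      then have "Jm \<le> J x" using Jm by auto
      moreover have "norm x^2 \<le> R0^2" using True by (simp add: power_mono)
      then have "c * norm x^2 \<le> \<bar>c\<bar> * R0^2"
        by (smt (verit) abs_ge_self abs_mult_pos mult_mono zero_le_power2)
      ultimately show ?thesis unfolding C_def by linarith
    next
      case False
      then have nx: "b0 \<le> norm x" "norm x > 0" "norm x \<ge> 1" unfolding R0_def by auto
      then have "c < J x / (norm x)^2" using b0 by blast
      then have "c * norm x^2 < J x" using nx by (simp add: less_divide_eq)
      then show ?thesis using Cpos by linarith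
    qed
    moreover have "x \<bullet> x = norm x^2" by (simp add: power2_norm_eq_inner)
    ultimately show ?thesis unfolding k_def by (simp add: algebra_simps)
  qed
  have Pbound: "norm x \<le> 1 + 2*norm y/k + 2*\<bar>t + C\<bar>/k" if "P y x \<le> t" for x y t
  proof (rule ccontr)
    assume "\<not> ?thesis"
    then have "k * norm x^2 - norm y * norm x > \<bar>t + C\<bar>"
      using quad_bound[OF kpos, of "norm y" "\<bar>t+C\<bar>" "norm x"] by auto
    moreover have "y \<bullet> x \<le> norm y * norm x" by (rule norm_cauchy_schwarz)
    ultimately have "P y x > t" using coer[of x] unfolding P_def by linarith
    then show False using that by simp
  qed
  have contP: "continuous_on UNIV (\<lambda>x. P y x)" for y unfolding P_def
    by (intro continuous_intros contJ)
  have bddP: "bounded {x. P y x \<le> t}" for y t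
    unfolding bounded_iff using Pbound by blast
  have exmin: "\<exists>x. \<forall>w. P y x \<le> P y w" for y
  proof -
    have comp: "compact {x. P y x \<le> P y 0}"
      using bddP closed_Collect_le[OF contP continuous_on_const]
      by (simp add: compact_eq_bounded_closed)
    have "{x. P y x \<le> P y 0} \<noteq> {}" by auto
    then obtain z where "z \<in> {x. P y x \<le> P y 0}" "\<forall>w\<in>{x. P y x \<le> P y 0}. P y z \<le> P y w"
      using continuous_attains_inf[OF comp _ continuous_on_subset[OF contP subset_UNIV]] by blast
    then show ?thesis by (metis (mono_tags, lifting) mem_Collect_eq nle_le order_trans)
  qed
  have critF: "F x = y" if "\<And>w. P y x \<le> P y w" for x y
  proof -
    have "(\<lambda>h. (F x - y) \<bullet> h) = (\<lambda>v. 0)"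
      by (rule differential_zero_maxmin[of x UNIV "P y"]) (use derP that in auto)
    then have "(F x - y) \<bullet> (F x - y) = 0" by meson
    then show ?thesis by simp
  qed
  have uniq: "a = b" if a: "\<And>w. P y a \<le> P y w" and b: "\<And>w. P y b \<le> P y w" for y a b
  proof (rule ccontr)
    assume ab: "a \<noteq> b"
    have Fa: "F a = y" and Fb: "F b = y" using critF a b by auto
    show False
    proof (rule mp_aux[of "P y" "\<lambda>x. F x - y" a b])
      show "(P y has_derivative (\<lambda>h. (F x - y) \<bullet> h)) (at x)" for x by (rule derP)
      show "continuous_on UNIV (\<lambda>x. F x - y)" by (intro continuous_intros contF)
      show "bounded {x. P y x \<le> t}" for t by (rule bddP)
      show "a \<noteq> b" by (rule ab)
      show "P y a \<le> P y x" for x by (rule a)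
      show "P y b = P y a" using a b by (meson antisym)
      show "x = a \<or> x = b" if "F x - y = 0" for x
      proof (rule ccontr)
        assume "\<not> (x = a \<or> x = b)"
        then show False using NH ab Fa Fb that unfolding F_def by auto
      qed
    qed
  qed
  define g where "g = (\<lambda>y. SOME x. \<forall>w. P y x \<le> P y w)"
  have gmin: "\<And>w. P y (g y) \<le> P y w" for y
    unfolding g_def using someI_ex[OF exmin[of y]] by blast
  have Fg: "F (g y) = y" for y using critF gmin by blast
  have ginj: "inj g" by (metis Fg injI)
  have gbound: "norm (g y) \<le> 1 + 2*norm y/k + 2*\<bar>J 0 + C\<bar>/k" for y
  proof -
    have "P y (g y) \<le> J 0" using gmin[of y 0] unfolding P_def by simp
    then show ?thesis by (rule Pbound)
  qed
  have closedMin: "closed {p. \<forall>w. P (fst p) (snd p) \<le> P (fst p) w}"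
  proof -
    have "{p. \<forall>w. P (fst p) (snd p) \<le> P (fst p) w} = (\<Inter>w. {p. P (fst p) (snd p) \<le> P (fst p) w})"
      by auto
    moreover have "closed {p. P (fst p) (snd p) \<le> P (fst p) w}" for w
      unfolding P_def
      by (intro closed_Collect_le continuous_intros continuous_on_compose2[OF contJ]) auto
    ultimately show ?thesis by (simp add: closed_INT)
  qed
  have gcont: "continuous_on UNIV g"
  proof (rule continuous_at_imp_continuous_on, rule ballI)
    fix y0 :: 'a
    define B where "B = 1 + 2*(norm y0 + 1)/k + 2*\<bar>J 0 + C\<bar>/k"
    have gB: "g \<in> cball y0 1 \<rightarrow> cball 0 B"
    proof
      fix y assume "y \<in> cball y0 1"
      then have "norm y \<le> norm y0 + 1" by (metis dist_norm mem_cball norm_triangle_sub add.commute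
          order_trans add_left_mono norm_minus_commute)
      then have "2*norm y/k \<le> 2*(norm y0 + 1)/k" using kpos by (simp add: divide_right_mono)
      then show "g y \<in> cball 0 B" using gbound[of y] unfolding B_def by simp
    qed
    have graph: "(\<lambda>y. (y, g y)) ` cball y0 1 = (cball y0 1 \<times> UNIV) \<inter> {p. \<forall>w. P (fst p) (snd p) \<le> P (fst p) w}"
    proof (rule equalityI)
      show "(\<lambda>y. (y, g y)) ` cball y0 1 \<subseteq> (cball y0 1 \<times> UNIV) \<inter> {p. \<forall>w. P (fst p) (snd p) \<le> P (fst p) w}"
        using gmin by auto
    next
      show "(cball y0 1 \<times> UNIV) \<inter> {p. \<forall>w. P (fst p) (snd p) \<le> P (fst p) w} \<subseteq> (\<lambda>y. (y, g y)) ` cball y0 1"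
      proof (rule subsetI)
        fix p assume p: "p \<in> (cball y0 1 \<times> UNIV) \<inter> {p. \<forall>w. P (fst p) (snd p) \<le> P (fst p) w}"
        then have "snd p = g (fst p)" using uniq[of "fst p" "snd p" "g (fst p)"] gmin by auto
        then have "p = (\<lambda>y. (y, g y)) (fst p)" by (simp add: prod_eq_iff)
        moreover have "fst p \<in> cball y0 1" using p by auto
        ultimately show "p \<in> (\<lambda>y. (y, g y)) ` cball y0 1" by blast
      qed
    qed
    have "continuous_on (cball y0 1) g"
      by (rule continuous_from_closed_graph[OF _ gB]) (auto simp: graph intro!: closed_Int closed_Times closedMin)
    then show "isCont g y0" using continuous_on_interior[of "cball y0 1" g y0] by simp
  qed
  have opn: "open (range g)"
    using invariance_of_domain[OF gcont open_UNIV] ginj by simp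
  have rg: "range g = {x. \<forall>w. P (F x) x \<le> P (F x) w}"
  proof (rule equalityI)
    show "range g \<subseteq> {x. \<forall>w. P (F x) x \<le> P (F x) w}" using gmin Fg by auto
  next
    show "{x. \<forall>w. P (F x) x \<le> P (F x) w} \<subseteq> range g"
    proof (rule subsetI)
      fix x assume "x \<in> {x. \<forall>w. P (F x) x \<le> P (F x) w}"
      then have "x = g (F x)" using uniq[of "F x" x "g (F x)"] gmin by auto
      then show "x \<in> range g" by (metis rangeI)
    qed
  qed
  have cls: "closed (range g)"
  proof -
    have "{x. \<forall>w. P (F x) x \<le> P (F x) w} = (\<Inter>w. {x. P (F x) x \<le> P (F x) w})" by auto
    moreover have "closed {x. P (F x) x \<le> P (F x) w}" for w
      unfolding P_def
      by (intro closed_Collect_le continuous_intros contJ contF)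
    ultimately show ?thesis using rg by (simp add: closed_INT)
  qed
  have allg: "range g = UNIV"
  proof -
    have "open (- range g)" using cls by (simp add: open_Compl)
    then have "range g \<inter> UNIV = {} \<or> (- range g) \<inter> UNIV = {}"
      using connectedD[OF connected_UNIV opn, of "- range g"] by auto
    then show ?thesis by auto
  qed
  have th: "theta_const J < ereal (\<mu>/2)"
    using mu(1) by (cases "theta_const J") auto
  then obtain z where zS: "z \<in> {ereal ((J x - J u) / (norm (x - u))^2) | u x. u \<in> global_minima J \<and> x \<noteq> u}"
    and zlt: "z < ereal (\<mu>/2)"
    unfolding theta_const_def by (auto simp: Inf_less_iff)
  then obtain u x0 where uM: "u \<in> global_minima J" and xu: "x0 \<noteq> u"
    and q: "(J x0 - J u) / (norm (x0 - u))^2 < \<mu>/2" by auto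
  have np: "(norm (x0 - u))^2 > 0" using xu by simp
  have q2: "J x0 - J u < \<mu>/2 * (norm (x0 - u))^2" using q np by (simp add: divide_less_eq)
  have J'u: "J' u = 0"
  proof -
    have "(\<lambda>h. J' u \<bullet> h) = (\<lambda>v. 0)"
      by (rule differential_zero_maxmin[of u UNIV J]) (use deriv uM in \<open>auto simp: global_minima_def\<close>)
    then have "J' u \<bullet> J' u = 0" by meson
    then show ?thesis by simp
  qed
  have "u \<in> range g" using allg by simp
  then have "P (F u) u \<le> P (F u) x0" using rg by auto
  moreover have "F u = - \<mu> *\<^sub>R u" unfolding F_def using J'u by simp
  ultimately have "J u - \<mu>/2 * (u \<bullet> u) + \<mu> * (u \<bullet> u) \<le> J x0 - \<mu>/2 * (x0 \<bullet> x0) + \<mu> * (u \<bullet> x0)"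
    unfolding P_def by simp
  moreover have neq: "(norm (x0 - u))^2 = x0 \<bullet> x0 - 2 * (u \<bullet> x0) + u \<bullet> u"
    by (simp add: power2_norm_eq_inner inner_diff_left inner_diff_right inner_commute)
  moreover have "\<mu> * (norm (x0 - u))^2 = \<mu> * (x0 \<bullet> x0) - 2 * \<mu> * (u \<bullet> x0) + \<mu> * (u \<bullet> u)"
    unfolding neq by (simp add: algebra_simps)
  ultimately show False using q2 by (simp add: algebra_simps)
qed

end
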